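(* Let $p\ge1$, $h,w,s$ positive integers with $s\le h$, $X\in\mathbb{R}^{h\times w}$ nonzero, $0<B\le wh^2$, $\delta\in(0,1/4)$, and $x_{\min}=\min_{|X_{i,j}|>0}|X_{i,j}|^p$. Let $0\le r\le l$ with $l-r\le \delta x_{\min}/(wh^2)$. Let $\Omega_l$ be an $l$-optimal support with $\mathrm{EMD}[\Omega_l]\le B$ and $\Omega_r$ an $r$-optimal support with $\mathrm{EMD}[\Omega_r]\ge B$. Let $d=\lfloor \mathrm{EMD}[\Omega_r]/B\rfloor$ and let $\Omega_r'$ be any support with $\Phi[\Omega_r']\ge\Phi[\Omega_r]/(2(d+1))$. Then, with $\mathrm{OPT}=\max_{\Omega\in\mathbb{M}_{k,B}}\Phi[\Omega]$, $$\max\{\Phi[\Omega_r'],\Phi[\Omega_l]\}\ \ge\ \left(\tfrac14-\delta\right)\mathrm{OPT}.$$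
   Context: A support is a set $\Omega\subseteq[h]\times[w]$, with columns $\Omega_j=\{i:(i,j)\in\Omega\}$; $\Phi[\Omega]=\sum_{(i,j)\in\Omega}|X_{i,j}|^p$. For finite $A,B\subset\mathbb{N}$ with $|A|=|B|$, $\mathrm{EMD}(A,B)=\min_\pi\sum_{a\in A}|a-\pi(a)|$ over bijections $\pi:A\to B$; if every column has $s$ elements, $\mathrm{EMD}[\Omega]=\sum_{j=1}^{w-1}\mathrm{EMD}(\Omega_j,\Omega_{j+1})$. $\mathcal{S}_s$ is the set of supports with $|\Omega_j|=s$ for all $j$, and $\mathbb{M}_{k,B}=\{\Omega\in\mathcal{S}_s:\mathrm{EMD}[\Omega]\le B\}$ where $k=sw$. For $\lambda\ge0$, a support $\Omega$ is $\lambda$-optimal if $\Omega\in\mathcal{S}_s$ and it maximizes $\Phi[\Omega]-\lambda\,\mathrm{EMD}[\Omega]$ over $\mathcal{S}_s$ (equivalently, it is the support of an integral min-cost max-flow in the EMD flow network with node costs $-|X_{i,j}|^p$, edge costs $\lambda|i_1-i_2|$ between consecutive columns, unit capacities, and supply/demand $s$). *)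

theory Defs
  imports Complex_Main
begin

text \<open>Supports are sets of positions (i,j) with rows i in {1..h} and columns j in {1..w}.
  The matrix X is a function nat => nat => real; only entries with 1 <= i <= h, 1 <= j <= w matter.\<close>

definition ndist :: "nat \<Rightarrow> nat \<Rightarrow> nat" where
  "ndist a b = (if a \<le> b then b - a else a - b)"

definition emd_set :: "nat set \<Rightarrow> nat set \<Rightarrow> nat" where
  "emd_set A B = (LEAST c. \<exists>\<pi>. bij_betw \<pi> A B \<and> c = (\<Sum>a\<in>A. ndist a (\<pi> a)))"

definition col :: "(nat \<times> nat) set \<Rightarrow> nat \<Rightarrow> nat set" where
  "col \<Omega> j = {i. (i, j) \<in> \<Omega>}"

definition EMD :: "nat \<Rightarrow> (nat \<times> nat) set \<Rightarrow> nat" where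
  "EMD w \<Omega> = (\<Sum>j = 1..w - 1. emd_set (col \<Omega> j) (col \<Omega> (j + 1)))"

definition Phi :: "real \<Rightarrow> (nat \<Rightarrow> nat \<Rightarrow> real) \<Rightarrow> (nat \<times> nat) set \<Rightarrow> real" where
  "Phi p X \<Omega> = (\<Sum>(i, j)\<in>\<Omega>. \<bar>X i j\<bar> powr p)"

definition is_support :: "nat \<Rightarrow> nat \<Rightarrow> (nat \<times> nat) set \<Rightarrow> bool" where
  "is_support h w \<Omega> \<longleftrightarrow> \<Omega> \<subseteq> {1..h} \<times> {1..w}"

definition S_s :: "nat \<Rightarrow> nat \<Rightarrow> nat \<Rightarrow> (nat \<times> nat) set set" where
  "S_s h w s = {\<Omega>. is_support h w \<Omega> \<and> (\<forall>j\<in>{1..w}. card (col \<Omega> j) = s)}"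

text \<open>M_{k,B} with k = s w.\<close>
definition M_kB :: "nat \<Rightarrow> nat \<Rightarrow> nat \<Rightarrow> real \<Rightarrow> (nat \<times> nat) set set" where
  "M_kB h w s B = {\<Omega> \<in> S_s h w s. real (EMD w \<Omega>) \<le> B}"

definition lambda_optimal ::
  "real \<Rightarrow> (nat \<Rightarrow> nat \<Rightarrow> real) \<Rightarrow> nat \<Rightarrow> nat \<Rightarrow> nat \<Rightarrow> real \<Rightarrow> (nat \<times> nat) set \<Rightarrow> bool" where
  "lambda_optimal p X h w s lam \<Omega> \<longleftrightarrow> \<Omega> \<in> S_s h w s \<and>
     (\<forall>\<Omega>'\<in>S_s h w s. Phi p X \<Omega>' - lam * real (EMD w \<Omega>') \<le> Phi p X \<Omega> - lam * real (EMD w \<Omega>))"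

definition x_min :: "real \<Rightarrow> (nat \<Rightarrow> nat \<Rightarrow> real) \<Rightarrow> nat \<Rightarrow> nat \<Rightarrow> real" where
  "x_min p X h w = Min {\<bar>X i j\<bar> powr p | i j. i \<in> {1..h} \<and> j \<in> {1..w} \<and> \<bar>X i j\<bar> > 0}"

definition OPT :: "real \<Rightarrow> (nat \<Rightarrow> nat \<Rightarrow> real) \<Rightarrow> nat \<Rightarrow> nat \<Rightarrow> nat \<Rightarrow> real \<Rightarrow> real" where
  "OPT p X h w s B = Max (Phi p X ` M_kB h w s B)"

end

theory Submission
  imports Defs
begin

lemma Phi_nonneg: "0 \<le> Phi p X \<Omega>"
  unfolding Phi_def by (intro sum_nonneg) auto

lemma emd_set_le:
  assumes "A \<subseteq> {1..h}" "B \<subseteq> {1..h}" "card A = card B"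
  shows "emd_set A B \<le> h * h"
proof -
  have fA: "finite A" "finite B" using assms finite_subset by blast+
  obtain \<pi> where pi: "bij_betw \<pi> A B" using finite_same_card_bij[OF fA assms(3)] by blast
  have "emd_set A B \<le> (\<Sum>a\<in>A. ndist a (\<pi> a))"
    unfolding emd_set_def by (rule Least_le) (use pi in blast)
  also have "\<dots> \<le> (\<Sum>a\<in>A. h)"
  proof (rule sum_mono)
    fix a assume a: "a \<in> A"
    have "\<pi> a \<in> B" using pi a bij_betwE by blast
    then have "\<pi> a \<le> h" "a \<le> h" using a assms by auto
    then show "ndist a (\<pi> a) \<le> h" unfolding ndist_def by auto
  qed
  also have "\<dots> = card A * h" by simp
  also have "\<dots> \<le> h * h"
  proof -
    have "card A \<le> card {1..h}" using assms(1) by (intro card_mono) auto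
    then show ?thesis by simp
  qed
  finally show ?thesis .
qed

lemma EMD_le:
  assumes "\<Omega> \<in> S_s h w s"
  shows "real (EMD w \<Omega>) \<le> real w * real h ^ 2"
proof -
  have "EMD w \<Omega> \<le> (\<Sum>j = 1..w - 1. h * h)"
    unfolding EMD_def
  proof (rule sum_mono)
    fix j assume j: "j \<in> {1..w - 1}"
    have sup: "\<Omega> \<subseteq> {1..h} \<times> {1..w}" and c: "\<forall>j\<in>{1..w}. card (col \<Omega> j) = s"
      using assms unfolding S_s_def is_support_def by auto
    show "emd_set (col \<Omega> j) (col \<Omega> (j + 1)) \<le> h * h"
      apply (rule emd_set_le)
      using sup j c unfolding col_def by auto
  qed
  also have "\<dots> \<le> w * (h * h)" by simp
  finally have "EMD w \<Omega> \<le> w * (h * h)" .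
  then have "real (EMD w \<Omega>) \<le> real (w * (h * h))" by linarith
  then show ?thesis by (simp add: power2_eq_square)
qed

lemma finite_S_s: "finite (S_s h w s)"
proof -
  have "S_s h w s \<subseteq> Pow ({1..h} \<times> {1..w})" unfolding S_s_def is_support_def by auto
  then show ?thesis by (rule finite_subset) simp
qed

theorem lemma11:
  fixes p :: real and h w s :: nat and X :: "nat \<Rightarrow> nat \<Rightarrow> real"
    and B \<delta> l r :: real and \<Omega>l \<Omega>r \<Omega>r' :: "(nat \<times> nat) set"
  assumes "p \<ge> 1" and "h > 0" and "w > 0" and "s > 0" and "s \<le> h"
    and "\<exists>i\<in>{1..h}. \<exists>j\<in>{1..w}. X i j \<noteq> 0"
    and "0 < B" and "B \<le> real w * real h ^ 2"
    and "0 < \<delta>" and "\<delta> < 1/4"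
    and "0 \<le> r" and "r \<le> l"
    and "l - r \<le> \<delta> * x_min p X h w / (real w * real h ^ 2)"
    and "lambda_optimal p X h w s l \<Omega>l" and "real (EMD w \<Omega>l) \<le> B"
    and "lambda_optimal p X h w s r \<Omega>r" and "real (EMD w \<Omega>r) \<ge> B"
    and "is_support h w \<Omega>r'"
    and "Phi p X \<Omega>r' \<ge> Phi p X \<Omega>r / (2 * (real_of_int \<lfloor>real (EMD w \<Omega>r) / B\<rfloor> + 1))"
  shows "max (Phi p X \<Omega>r') (Phi p X \<Omega>l) \<ge> (1/4 - \<delta>) * OPT p X h w s B"
proof -
  note lo = assms(14)[unfolded lambda_optimal_def]
  note ro = assms(16)[unfolded lambda_optimal_def]
  define Opt where "Opt = OPT p X h w s B"
  have finM: "finite (M_kB h w s B)"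
    using finite_S_s by (rule finite_subset[rotated]) (auto simp: M_kB_def)
  have lM: "\<Omega>l \<in> M_kB h w s B" using lo assms(15) by (simp add: M_kB_def)
  have "Opt \<in> Phi p X ` M_kB h w s B"
    unfolding Opt_def OPT_def using finM lM by (intro Max_in) auto
  then obtain \<Omega>s where sM: "\<Omega>s \<in> M_kB h w s B" and Os: "Opt = Phi p X \<Omega>s" by blast
  have Omax: "\<And>\<Omega>. \<Omega> \<in> M_kB h w s B \<Longrightarrow> Phi p X \<Omega> \<le> Opt"
    unfolding Opt_def OPT_def using finM by (intro Max_ge) auto
  obtain i0 j0 where ij: "i0 \<in> {1..h}" "j0 \<in> {1..w}" "X i0 j0 \<noteq> 0" using assms(6) by blast
  have "s - 1 \<le> card ({1..h} - {i0})" using ij assms(5) by simp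
  then obtain T where T: "T \<subseteq> {1..h} - {i0}" "card T = s - 1" "finite T"
    by (rule obtain_subset_with_card_n)
  define S where "S = insert i0 T"
  have S: "S \<subseteq> {1..h}" "card S = s" "i0 \<in> S" "finite S"
    using T ij assms(4) unfolding S_def by (auto simp: card_insert_if)
  define \<Omega>0 where "\<Omega>0 = S \<times> {1..w}"
  have col0: "\<And>j. j \<in> {1..w} \<Longrightarrow> col \<Omega>0 j = S" unfolding \<Omega>0_def col_def by auto
  have emd0: "emd_set S S = 0"
    unfolding emd_set_def
    by (rule Least_eq_0) (rule exI[of _ id], simp add: ndist_def)
  have "EMD w \<Omega>0 = 0" unfolding EMD_def
    by (rule sum.neutral) (use col0 emd0 in auto)
  then have M0: "\<Omega>0 \<in> M_kB h w s B"
    using S col0 assms(7) unfolding M_kB_def S_s_def is_support_def \<Omega>0_def by auto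
  have "\<bar>X i0 j0\<bar> powr p \<le> Phi p X \<Omega>0"
    unfolding Phi_def
    using member_le_sum[of "(i0,j0)" \<Omega>0 "\<lambda>(i, j). \<bar>X i j\<bar> powr p"] S ij
    unfolding \<Omega>0_def by auto
  also have "\<dots> \<le> Opt" using Omax M0 .
  finally have x0O: "\<bar>X i0 j0\<bar> powr p \<le> Opt" .
  define XS where "XS = {\<bar>X i j\<bar> powr p | i j. i \<in> {1..h} \<and> j \<in> {1..w} \<and> \<bar>X i j\<bar> > 0}"
  have "XS \<subseteq> (\<lambda>(i,j). \<bar>X i j\<bar> powr p) ` ({1..h} \<times> {1..w})" unfolding XS_def by auto
  then have finXS: "finite XS" by (rule finite_subset) simp
  have inXS: "\<bar>X i0 j0\<bar> powr p \<in> XS" unfolding XS_def using ij by auto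
  have xm_le: "x_min p X h w \<le> \<bar>X i0 j0\<bar> powr p"
    unfolding x_min_def XS_def[symmetric] using finXS inXS by (rule Min_le)
  have xm_ge: "0 \<le> x_min p X h w"
    unfolding x_min_def XS_def[symmetric] using finXS inXS by (subst Min_ge_iff) (auto simp: XS_def)
  have xO: "x_min p X h w \<le> Opt" using xm_le x0O by linarith
  define Er where "Er = real (EMD w \<Omega>r)"
  define El where "El = real (EMD w \<Omega>l)"
  define Es where "Es = real (EMD w \<Omega>s)"
  have Es: "Es \<le> B" using sM unfolding Es_def M_kB_def by auto
  have sS: "\<Omega>s \<in> S_s h w s" using sM unfolding M_kB_def by auto
  have r1: "Opt - r * Es \<le> Phi p X \<Omega>r - r * Er" using ro sS Os unfolding Es_def Er_def by auto
  have l1: "Phi p X \<Omega>r - l * Er \<le> Phi p X \<Omega>l - l * El" using lo ro unfolding Er_def El_def by auto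
  have ErB: "Er \<le> real w * real h ^ 2" using EMD_le ro Er_def by auto
  have wh: "0 < real w * real h ^ 2" using assms(2,3) by simp
  have El0: "0 \<le> El" unfolding El_def by simp
  have "(l - r) * Er \<le> (\<delta> * x_min p X h w / (real w * real h ^ 2)) * Er"
    using assms(13,17) assms(7) unfolding Er_def by (intro mult_right_mono) auto
  also have "\<dots> = \<delta> * x_min p X h w * (Er / (real w * real h ^ 2))" by simp
  also have "\<dots> \<le> \<delta> * x_min p X h w * 1"
    using ErB wh xm_ge assms(9) by (intro mult_left_mono) auto
  finally have lr: "(l - r) * Er \<le> \<delta> * Opt" using xO assms(9)
    by (smt (verit) mult_left_mono)
  have rEs: "r * Es \<le> r * B" using Es assms(11) by (rule mult_left_mono)
  have lEl: "0 \<le> l * El" using El0 assms(11,12) by simp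
  define x where "x = r * B"
  have Phil: "Phi p X \<Omega>l \<ge> (1 - \<delta>) * Opt - x"
    using r1 l1 lr rEs lEl unfolding x_def by (simp add: algebra_simps)
  have Phir: "Phi p X \<Omega>r \<ge> Opt + r * Er - x" using r1 rEs unfolding x_def by simp
  define u where "u = Er / B"
  have u1: "1 \<le> u" unfolding u_def using assms(7,17) Er_def by simp
  have Eru: "r * Er - x = x * (u - 1)" unfolding u_def x_def using assms(7)
    by (simp add: field_simps)
  define D where "D = real_of_int \<lfloor>u\<rfloor> + 1"
  have D: "1 \<le> D" "D \<le> u + 1" unfolding D_def using u1 by linarith+
  have P': "Phi p X \<Omega>r' \<ge> Phi p X \<Omega>r / (2 * D)" using assms(19) unfolding D_def u_def Er_def .
  have "Phi p X \<Omega>r \<le> 2 * D * Phi p X \<Omega>r'" using P' D by (simp add: field_simps)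
  also have "\<dots> \<le> 2 * (u + 1) * Phi p X \<Omega>r'"
    using D Phi_nonneg[of p X \<Omega>r'] by (intro mult_right_mono) auto
  finally have A: "Opt + x * (u - 1) \<le> 2 * (u + 1) * Phi p X \<Omega>r'" using Phir Eru by linarith
  define M where "M = max (Phi p X \<Omega>r') (Phi p X \<Omega>l)"
  have B1: "(u - 1) * ((1 - \<delta>) * Opt - x) \<le> (u - 1) * M"
    using Phil u1 unfolding M_def by (intro mult_left_mono) auto
  have B2: "2 * (u + 1) * Phi p X \<Omega>r' \<le> 2 * (u + 1) * M"
    using u1 unfolding M_def by (intro mult_left_mono) auto
  have Opt0: "0 \<le> Opt" using Os Phi_nonneg by simp
  have C: "Opt + (u - 1) * (1 - \<delta>) * Opt \<le> (3 * u + 1) * M"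
    using A B1 B2 by (simp add: algebra_simps)
  have "(1/4 - \<delta>) * Opt * (3 * u + 1) \<le> Opt + (u - 1) * (1 - \<delta>) * Opt"
  proof -
    have "0 \<le> Opt * (u - 1 + 8 * \<delta> * u + 8 * \<delta>)" using Opt0 u1 assms(9) by simp
    then show ?thesis by (simp add: algebra_simps)
  qed
  then have "(1/4 - \<delta>) * Opt * (3 * u + 1) \<le> M * (3 * u + 1)" using C by (simp add: algebra_simps)
  then have "(1/4 - \<delta>) * Opt \<le> M"
  proof (rule mult_right_le_imp_le)
    show "0 < 3 * u + 1" using u1 by simp
  qed
  then show ?thesis unfolding M_def Opt_def .
qed

end
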